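(* Let $S$ be a semigroup and $m\ge1$ such that $S^m$ is a rectangular band. Then: (1) if $m=1$, $S$ is abelian; (2) $S$ is $(\lceil\log_2 m\rceil+1)$-solvable, and $\lceil\log_2 m\rceil$-solvable if $S^m$ is trivial (a single element); (3) $S$ is left $2m$-nilpotent, right $2m$-nilpotent and $2m$-supernilpotent, and in case $S^m$ is trivial it is left and right $m$-nilpotent and $m$-supernilpotent.
   Context: $S^m=\{a_1\cdots a_m: a_i\in S\}$. A rectangular band is a semigroup satisfying $x^2=x$ and $xyz=xz$. For an algebra $\mathbf A$ and congruences $\alpha_1,\dots,\alpha_n$, $M_{\mathbf A}(\alpha_1,\dots,\alpha_n)$ is the subalgebra of $\mathbf A^{\{0,1\}^n}$ generated by all $g$ such that for some $i$ and $(a,b)\in\alpha_i$, $g(x)=a$ if $x_i=0$ and $g(x)=b$ if $x_i=1$; $[\alpha_1,\dots,\alpha_n]$ is the smallest congruence $\delta$ such that for all $f\in M_{\mathbf A}(\alpha_1,\dots,\alpha_n)$: if $(f(x0),f(x1))\in\delta$ for all $x\in\{0,1\}^{n-1}\setminus\{(1,\dots,1)\}$ then $(f(1,\dots,1,0),f(1,\dots,1,1))\in\delta$. With $1$ total, $0$ trivial congruence: $[1]^0=1$, $[1]^{k+1}=[[1]^k,[1]^k]$; $(1]^1=1$, $(1]^{k+1}=[1,(1]^k]$; $[1)^1=1$, $[1)^{k+1}=[[1)^k,1]$. Abelian: $[1,1]=0$; $d$-solvable: $[1]^d=0$; left $d$-nilpotent: $(1]^{d+1}=0$; right $d$-nilpotent: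 $[1)^{d+1}=0$; $d$-supernilpotent: the $(d+1)$-ary $[1,\dots,1]=0$. *)

theory Defs
  imports Complex_Main
begin

fun sprod :: "'a::semigroup_mult list \<Rightarrow> 'a" where
  "sprod [] = undefined"
| "sprod [x] = x"
| "sprod (x # y # ys) = x * sprod (y # ys)"

definition spow :: "nat \<Rightarrow> 'a::semigroup_mult set" where
  "spow m = {sprod xs | xs. length xs = m}"

definition rect_band :: "'a::semigroup_mult set \<Rightarrow> bool" where
  "rect_band T \<longleftrightarrow> (\<forall>x\<in>T. x * x = x) \<and> (\<forall>x\<in>T. \<forall>y\<in>T. \<forall>z\<in>T. x * y * z = x * z)"

definition congruence :: "'a::semigroup_mult rel \<Rightarrow> bool" where
  "congruence \<theta> \<longleftrightarrow> equiv UNIV \<theta> \<and>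
     (\<forall>a b c d. (a, b) \<in> \<theta> \<longrightarrow> (c, d) \<in> \<theta> \<longrightarrow> (a * c, b * d) \<in> \<theta>)"

text \<open>M_A(alpha_1,...,alpha_n): points of {0,1}^n are bool lists of length n
  (True = 1); coordinate i is list index i (0-based). Functions are defined on all
  bool lists but only their values on lists of length n are relevant.\<close>
inductive_set Mset :: "'a::semigroup_mult rel list \<Rightarrow> (bool list \<Rightarrow> 'a) set"
  for \<alpha>s :: "'a rel list" where
  gen: "i < length \<alpha>s \<Longrightarrow> (a, b) \<in> \<alpha>s ! i \<Longrightarrow> (\<lambda>x. if x ! i then b else a) \<in> Mset \<alpha>s"
| mult: "f \<in> Mset \<alpha>s \<Longrightarrow> g \<in> Mset \<alpha>s \<Longrightarrow> (\<lambda>x. f x * g x) \<in> Mset \<alpha>s"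

definition term_cond :: "'a::semigroup_mult rel list \<Rightarrow> 'a rel \<Rightarrow> bool" where
  "term_cond \<alpha>s \<delta> \<longleftrightarrow> (\<forall>f \<in> Mset \<alpha>s.
     (\<forall>x. length x = length \<alpha>s - 1 \<and> x \<noteq> replicate (length \<alpha>s - 1) True \<longrightarrow>
          (f (x @ [False]), f (x @ [True])) \<in> \<delta>) \<longrightarrow>
     (f (replicate (length \<alpha>s - 1) True @ [False]),
      f (replicate (length \<alpha>s - 1) True @ [True])) \<in> \<delta>)"

definition comm :: "'a::semigroup_mult rel list \<Rightarrow> 'a rel" where
  "comm \<alpha>s = \<Inter> {\<delta>. congruence \<delta> \<and> term_cond \<alpha>s \<delta>}"

fun derived :: "nat \<Rightarrow> 'a::semigroup_mult rel" where
  "derived 0 = UNIV"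
| "derived (Suc k) = comm [derived k, derived k]"

text \<open>lseries k = (1]^k and rseries k = [1)^k for k \<ge> 1 (index 0 unused, set to UNIV).\<close>
fun lseries :: "nat \<Rightarrow> 'a::semigroup_mult rel" where
  "lseries 0 = UNIV"
| "lseries (Suc 0) = UNIV"
| "lseries (Suc (Suc k)) = comm [UNIV, lseries (Suc k)]"

fun rseries :: "nat \<Rightarrow> 'a::semigroup_mult rel" where
  "rseries 0 = UNIV"
| "rseries (Suc 0) = UNIV"
| "rseries (Suc (Suc k)) = comm [rseries (Suc k), UNIV]"

definition abelian :: "'a::semigroup_mult itself \<Rightarrow> bool" where
  "abelian _ \<longleftrightarrow> comm [UNIV, UNIV :: 'a rel] = Id"

definition solvable :: "'a::semigroup_mult itself \<Rightarrow> nat \<Rightarrow> bool" where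
  "solvable _ d \<longleftrightarrow> (derived d :: 'a rel) = Id"

definition left_nilpotent :: "'a::semigroup_mult itself \<Rightarrow> nat \<Rightarrow> bool" where
  "left_nilpotent _ d \<longleftrightarrow> (lseries (d + 1) :: 'a rel) = Id"

definition right_nilpotent :: "'a::semigroup_mult itself \<Rightarrow> nat \<Rightarrow> bool" where
  "right_nilpotent _ d \<longleftrightarrow> (rseries (d + 1) :: 'a rel) = Id"

definition supernilpotent :: "'a::semigroup_mult itself \<Rightarrow> nat \<Rightarrow> bool" where
  "supernilpotent _ d \<longleftrightarrow> comm (replicate (d + 1) (UNIV :: 'a rel)) = Id"

end

theory Submission
  imports Defs
begin


lemma sprod_Cons: "sprod (x # xs) = (if xs = [] then x else x * sprod xs)"
  by (cases xs) auto

lemma sprod_append: "xs \<noteq> [] \<Longrightarrow> ys \<noteq> [] \<Longrightarrow> sprod (xs @ ys) = sprod xs * sprod ys"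
  by (induction xs) (auto simp: sprod_Cons mult.assoc)

lemma sprod_app2: "sprod (xs @ y # ys) = (if xs = [] then sprod (y # ys) else sprod xs * sprod (y # ys))"
  using sprod_append[of xs "y # ys"] by auto

lemma sprod_flat: "W \<noteq> [] \<Longrightarrow> sprod (A @ sprod W # B) = sprod (A @ W @ B)"
proof -
  assume W: "W \<noteq> []"
  have 1: "sprod (sprod W # B) = sprod (W @ B)"
    using W by (cases "B = []") (auto simp: sprod_Cons sprod_append)
  show ?thesis
  proof (cases "A = []")
    case True then show ?thesis using 1 by simp
  next
    case False
    then show ?thesis using 1 W by (simp add: sprod_append)
  qed
qed

lemma sprod_in_spow:
  assumes "1 \<le> m" "m \<le> length xs" shows "sprod xs \<in> spow m"
proof -
  define k where "k = length xs - m"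
  have ne: "take (Suc k) xs \<noteq> []" using assms by (auto simp: k_def)
  have "sprod xs = sprod ([] @ sprod (take (Suc k) xs) # drop (Suc k) xs)"
    using sprod_flat[OF ne, of "[]" "drop (Suc k) xs"] by simp
  moreover have "length (sprod (take (Suc k) xs) # drop (Suc k) xs) = m"
    using assms by (auto simp: k_def)
  ultimately show ?thesis unfolding spow_def by (metis (mono_tags, lifting) append_Nil mem_Collect_eq)
qed

lemma spow_ne: "a \<in> spow m \<Longrightarrow> 1 \<le> m \<Longrightarrow> \<exists>xs. xs \<noteq> [] \<and> length xs = m \<and> a = sprod xs"
proof -
  assume "a \<in> spow m" "1 \<le> m"
  then obtain xs where "length xs = m" "a = sprod xs" unfolding spow_def by blast
  then show ?thesis using \<open>1 \<le> m\<close> by (intro exI[of _ xs]) auto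
qed

lemma sprod_mem:
  assumes m: "1 \<le> m" and e: "e \<in> set xs" "e \<in> spow m" shows "sprod xs \<in> spow m"
proof -
  obtain A B where xs: "xs = A @ e # B" using e by (meson split_list)
  obtain es where es: "es \<noteq> []" "length es = m" "e = sprod es" using spow_ne[OF e(2) m] by blast
  have "sprod xs = sprod (A @ es @ B)" using sprod_flat[OF es(1)] xs es by simp
  moreover have "m \<le> length (A @ es @ B)" using es by simp
  ultimately show ?thesis using sprod_in_spow[OF m, of "A @ es @ B"] by simp
qed

lemma spow_mult: "1 \<le> m \<Longrightarrow> a \<in> spow m \<Longrightarrow> a * c \<in> spow m \<and> c * a \<in> spow m"
  using sprod_mem[of m a "[a, c]"] sprod_mem[of m a "[c, a]"] by simp

lemma spow_mono: "1 \<le> m \<Longrightarrow> m \<le> k \<Longrightarrow> spow k \<subseteq> spow m"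
  unfolding spow_def using sprod_in_spow[of m] by (auto simp: spow_def)

lemma spow_1: "spow 1 = UNIV"
  unfolding spow_def by (auto intro!: exI[of _ "[x]" for x])

lemma two_pos:
  assumes "g1 \<in> set gs" "g2 \<in> set gs" "g1 \<noteq> g2"
  shows "\<exists>A M C. gs = A @ g1 # M @ g2 # C \<or> gs = A @ g2 # M @ g1 # C"
proof -
  obtain A B where gs: "gs = A @ g1 # B" using assms(1) by (meson split_list)
  then have "g2 \<in> set A \<or> g2 \<in> set B" using assms by auto
  then show ?thesis
  proof
    assume "g2 \<in> set A"
    then obtain A1 A2 where "A = A1 @ g2 # A2" by (meson split_list)
    then show ?thesis using gs by auto
  next
    assume "g2 \<in> set B"
    then obtain B1 B2 where "B = B1 @ g2 # B2" by (meson split_list)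
    then show ?thesis using gs by auto
  qed
qed

lemma spow_add:
  assumes a: "1 \<le> a" and b: "1 \<le> b" and xs: "xs = A @ e # M @ g # C"
    and e: "e \<in> spow a" and g: "g \<in> spow b"
  shows "sprod xs \<in> spow (a + b)"
proof -
  obtain es where es: "es \<noteq> []" "length es = a" "e = sprod es" using spow_ne[OF e a] by blast
  obtain gs where gs: "gs \<noteq> []" "length gs = b" "g = sprod gs" using spow_ne[OF g b] by blast
  have "sprod xs = sprod (A @ es @ M @ gs @ C)"
    using sprod_flat[OF es(1), of A "M @ g # C"] sprod_flat[OF gs(1), of "A @ es @ M" C] xs es gs
    by simp
  moreover have "a + b \<le> length (A @ es @ M @ gs @ C)" using es gs by simp
  ultimately show ?thesis using sprod_in_spow[of "a+b" "A @ es @ M @ gs @ C"] a by simp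
qed

definition ev :: "bool list \<Rightarrow> nat \<times> 'a \<times> 'a \<Rightarrow> 'a" where
  "ev x g = (if x ! fst g then snd (snd g) else fst (snd g))"

lemma Mset_rep:
  "f \<in> Mset \<alpha>s \<Longrightarrow> \<exists>gs. gs \<noteq> [] \<and> (\<forall>g\<in>set gs. fst g < length \<alpha>s \<and> snd g \<in> \<alpha>s ! fst g)
      \<and> f = (\<lambda>x. sprod (map (ev x) gs))"
proof (induction rule: Mset.induct)
  case (gen i a b)
  then show ?case by (intro exI[of _ "[(i, a, b)]"]) (auto simp: ev_def)
next
  case (mult f g)
  then obtain gs1 gs2 where
    "gs1 \<noteq> []" "\<forall>g\<in>set gs1. fst g < length \<alpha>s \<and> snd g \<in> \<alpha>s ! fst g" "f = (\<lambda>x. sprod (map (ev x) gs1))"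
    "gs2 \<noteq> []" "\<forall>g\<in>set gs2. fst g < length \<alpha>s \<and> snd g \<in> \<alpha>s ! fst g" "g = (\<lambda>x. sprod (map (ev x) gs2))"
    by blast
  then show ?case by (intro exI[of _ "gs1 @ gs2"]) (auto simp: sprod_append)
qed

definition comm_ok :: "'a::semigroup_mult rel \<Rightarrow> bool" where
  "comm_ok \<delta> \<longleftrightarrow> congruence \<delta>"

lemma comm_le: "congruence \<delta> \<Longrightarrow> term_cond \<alpha>s \<delta> \<Longrightarrow> comm \<alpha>s \<subseteq> \<delta>"
  unfolding comm_def by blast

lemma Id_le_comm: "Id \<subseteq> comm \<alpha>s"
  unfolding comm_def congruence_def equiv_def refl_on_def by blast

lemma congruence_Id: "congruence (Id :: 'a::semigroup_mult rel)"
  unfolding congruence_def by (auto simp: equiv_def refl_on_def sym_def trans_def)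

lemma comm_Id: "term_cond \<alpha>s Id \<Longrightarrow> comm \<alpha>s = Id"
  using comm_le[OF congruence_Id] Id_le_comm by blast

definition Rees :: "'a set \<Rightarrow> 'a rel" where
  "Rees I = {(a, b). a = b \<or> (a \<in> I \<and> b \<in> I)}"

lemma Rees_cong: "1 \<le> k \<Longrightarrow> congruence (Rees (spow k :: 'a::semigroup_mult set))"
  unfolding congruence_def Rees_def using spow_mult[of k]
  by (auto simp: equiv_def refl_on_def sym_def trans_def)

lemma Rees_mono: "I \<subseteq> J \<Longrightarrow> Rees I \<subseteq> Rees J"
  unfolding Rees_def by auto

lemma Rees_single: "Rees {a} = Id"
  unfolding Rees_def by auto

lemma Rees_1: "Rees (spow 1) = UNIV"
  unfolding Rees_def spow_1 by auto



declare map_eq_conv[simp del]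

definition ev2 :: "bool \<Rightarrow> bool \<Rightarrow> nat \<times> 'a \<times> 'a \<Rightarrow> 'a" where
  "ev2 x y g = (if fst g = 0 then (if x then snd (snd g) else fst (snd g))
                else (if y then snd (snd g) else fst (snd g)))"

definition nontriv :: "nat \<times> 'a \<times> 'a \<Rightarrow> bool" where
  "nontriv g \<longleftrightarrow> fst (snd g) \<noteq> snd (snd g)"

lemma ev2_y: "\<not> (fst g \<noteq> 0 \<and> nontriv g) \<Longrightarrow> ev2 x y g = ev2 x y' g"
  by (auto simp: ev2_def nontriv_def)

lemma ev2_x: "\<not> (fst g = 0 \<and> nontriv g) \<Longrightarrow> ev2 x y g = ev2 x' y g"
  by (auto simp: ev2_def nontriv_def)

lemma ev2_triv: "\<not> nontriv g \<Longrightarrow> ev2 x y g = ev2 x' y' g"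
  by (auto simp: ev2_def nontriv_def)

lemma ev_ev2: "fst g < 2 \<Longrightarrow> ev [x, y] g = ev2 x y g"
  by (cases "fst g") (auto simp: ev_def ev2_def)

lemma tc2:
  assumes "\<And>gs. gs \<noteq> [] \<Longrightarrow> \<forall>g\<in>set gs. (fst g = 0 \<and> snd g \<in> \<alpha>) \<or> (fst g = 1 \<and> snd g \<in> \<beta>) \<Longrightarrow>
     (sprod (map (ev2 False False) gs), sprod (map (ev2 False True) gs)) \<in> \<delta> \<Longrightarrow>
     (sprod (map (ev2 True False) gs), sprod (map (ev2 True True) gs)) \<in> \<delta>"
  shows "term_cond [\<alpha>, \<beta>] \<delta>"
  unfolding term_cond_def
proof (intro ballI impI)
  fix f assume f: "f \<in> Mset [\<alpha>, \<beta>]"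
    and H: "\<forall>x. length x = length [\<alpha>, \<beta>] - 1 \<and> x \<noteq> replicate (length [\<alpha>, \<beta>] - 1) True \<longrightarrow>
             (f (x @ [False]), f (x @ [True])) \<in> \<delta>"
  obtain gs where gs: "gs \<noteq> []" "\<forall>g\<in>set gs. fst g < 2 \<and> snd g \<in> [\<alpha>, \<beta>] ! fst g"
    "f = (\<lambda>x. sprod (map (ev x) gs))" using Mset_rep[OF f] by (metis length_Cons list.size(3) numeral_2_eq_2)
  have fe: "f [x, y] = sprod (map (ev2 x y) gs)" for x y
  proof -
    have "map (ev [x, y]) gs = map (ev2 x y) gs"
    proof (rule map_cong[OF refl])
      fix g assume "g \<in> set gs"
      then have "fst g < 2" using gs(2) by blast
      then show "ev [x, y] g = ev2 x y g" by (rule ev_ev2)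
    qed
    then show ?thesis unfolding gs(3) by (simp only:)
  qed
  have val: "\<forall>g\<in>set gs. (fst g = 0 \<and> snd g \<in> \<alpha>) \<or> (fst g = 1 \<and> snd g \<in> \<beta>)"
  proof
    fix g assume "g \<in> set gs"
    then have "fst g < 2" "snd g \<in> [\<alpha>, \<beta>] ! fst g" using gs(2) by auto
    then show "(fst g = 0 \<and> snd g \<in> \<alpha>) \<or> (fst g = 1 \<and> snd g \<in> \<beta>)"
      by (cases "fst g") (auto simp: less_Suc_eq)
  qed
  have "(f [False, False], f [False, True]) \<in> \<delta>" using H[rule_format, of "[False]"] by simp
  then have "(f [True, False], f [True, True]) \<in> \<delta>" using assms[OF gs(1) val] by (simp add: fe)
  then show "(f (replicate (length [\<alpha>, \<beta>] - 1) True @ [False]),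
        f (replicate (length [\<alpha>, \<beta>] - 1) True @ [True])) \<in> \<delta>" by simp
qed


lemma tcn:
  fixes \<alpha>s :: "'a::semigroup_mult rel list"
  assumes len: "length \<alpha>s = n" and n: "1 \<le> n"
    and red: "\<And>gs::(nat \<times> 'a \<times> 'a) list. gs \<noteq> [] \<Longrightarrow> \<forall>g\<in>set gs. fst g < n \<Longrightarrow>
       \<exists>gs'. set gs' \<subseteq> set gs \<and> length gs' < n \<and> (\<forall>x. sprod (map (ev x) gs) = sprod (map (ev x) gs'))"
  shows "term_cond \<alpha>s Id"
  unfolding term_cond_def
proof (intro ballI impI)
  fix f assume f: "f \<in> Mset \<alpha>s"
    and H: "\<forall>x. length x = length \<alpha>s - 1 \<and> x \<noteq> replicate (length \<alpha>s - 1) True \<longrightarrow>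
             (f (x @ [False]), f (x @ [True])) \<in> Id"
  obtain gs where gs: "gs \<noteq> []" "\<forall>g\<in>set gs. fst g < n"
    "f = (\<lambda>x. sprod (map (ev x) gs))" using Mset_rep[OF f] len by auto
  obtain gs' where gs': "set gs' \<subseteq> set gs" "length gs' < n"
    "\<forall>x. sprod (map (ev x) gs) = sprod (map (ev x) gs')" using red[OF gs(1,2)] by blast
  define I where "I = fst ` set gs'"
  have "card I < n" unfolding I_def using gs'(2)
    using card_image_le[of "set gs'" fst] card_length[of gs'] by simp
  then have "\<not> {0..<n} \<subseteq> I"
    by (metis I_def card_atLeastLessThan card_mono diff_zero finite_imageI finite_set leD)
  then obtain i where i: "i < n" "i \<notin> I" by (meson atLeastLessThan_iff subsetI zero_le)
  have Ilt: "k \<in> I \<Longrightarrow> k < n" for k using gs'(1) gs(2) unfolding I_def by auto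
  have indep: "f x = f x'" if "\<forall>k\<in>I. x ! k = x' ! k" for x x'
  proof -
    have "map (ev x) gs' = map (ev x') gs'"
      using that unfolding I_def ev_def by (auto simp: map_eq_conv)
    then show ?thesis using gs(3) gs'(3) by (simp del: map_eq_conv)
  qed
  define r where "r = replicate (n - 1) True"
  show "(f (replicate (length \<alpha>s - 1) True @ [False]),
        f (replicate (length \<alpha>s - 1) True @ [True])) \<in> Id"
  proof (cases "i = n - 1")
    case True
    have "\<forall>k\<in>I. (r @ [False]) ! k = (r @ [True]) ! k"
    proof
      fix k assume "k \<in> I"
      then have "k < n - 1" using Ilt i True by (metis le_neq_implies_less less_Suc_eq_le n Suc_pred' le_less_trans less_one not_le)
      then show "(r @ [False]) ! k = (r @ [True]) ! k" unfolding r_def by (simp add: nth_append)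
    qed
    then show ?thesis using indep len unfolding r_def by auto
  next
    case False
    then have i1: "i < n - 1" using i by auto
    define y where "y = r[i := False]"
    have ly: "length y = n - 1" unfolding y_def r_def by simp
    have yr: "y \<noteq> r" using i1 unfolding y_def r_def by (metis length_replicate nth_list_update_eq nth_replicate)
    have Hy: "f (y @ [False]) = f (y @ [True])" using H[rule_format, of y] ly yr len unfolding r_def by auto
    have eq: "f (r @ [b]) = f (y @ [b])" for b
    proof (rule indep, intro ballI)
      fix k assume "k \<in> I"
      then have "k < n" "k \<noteq> i" using Ilt i by auto
      then show "(r @ [b]) ! k = (y @ [b]) ! k" unfolding y_def r_def
        by (cases "k < n - 1") (auto simp: nth_append nth_list_update)
    qed
    show ?thesis using eq[of False] eq[of True] Hy len unfolding r_def by simp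
  qed
qed


lemma tc_Rees:
  assumes a: "1 \<le> a" and b: "1 \<le> b" and ha: "\<alpha> \<subseteq> Rees (spow a)" and hb: "\<beta> \<subseteq> Rees (spow b)"
  shows "term_cond [\<alpha>, \<beta>] (Rees (spow (a + b) :: 'a::semigroup_mult set))"
proof (rule tc2)
  fix gs :: "(nat \<times> 'a \<times> 'a) list"
  assume ne: "gs \<noteq> []" and val: "\<forall>g\<in>set gs. (fst g = 0 \<and> snd g \<in> \<alpha>) \<or> (fst g = 1 \<and> snd g \<in> \<beta>)"
    and H: "(sprod (map (ev2 False False) gs), sprod (map (ev2 False True) gs)) \<in> Rees (spow (a + b))"
  show "(sprod (map (ev2 True False) gs), sprod (map (ev2 True True) gs)) \<in> Rees (spow (a + b))"
  proof (cases "\<exists>g\<in>set gs. fst g \<noteq> 0 \<and> nontriv g")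
    case False
    have "map (ev2 True False) gs = map (ev2 True True) gs"
    proof (rule map_cong[OF refl])
      fix g assume "g \<in> set gs"
      with False show "ev2 True False g = ev2 True True g" by (intro ev2_y) blast
    qed
    then show ?thesis by (simp add: Rees_def)
  next
    case Ty: True
    show ?thesis
    proof (cases "\<exists>g\<in>set gs. fst g = 0 \<and> nontriv g")
      case False
      have "map (ev2 True y) gs = map (ev2 False y) gs" for y
      proof (rule map_cong[OF refl])
        fix g assume "g \<in> set gs"
        with False show "ev2 True y g = ev2 False y g" by (intro ev2_x) blast
      qed
      then show ?thesis using H by simp
    next
      case True
      then obtain g1 where g1: "g1 \<in> set gs" "fst g1 = 0" "nontriv g1" by blast
      from Ty obtain g2 where g2: "g2 \<in> set gs" "fst g2 \<noteq> 0" "nontriv g2" by blast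
      have v1: "ev2 True y g1 \<in> spow a" for y
      proof -
        obtain i u v where gg: "g1 = (i, u, v)" by (cases g1) auto
        have "(u, v) \<in> \<alpha>" using g1 val gg by auto
        then have "u \<in> spow a \<and> v \<in> spow a" using ha g1(3) gg unfolding Rees_def nontriv_def by auto
        then show ?thesis using gg g1(2) unfolding ev2_def by auto
      qed
      have v2: "ev2 True y g2 \<in> spow b" for y
      proof -
        obtain i u v where gg: "g2 = (i, u, v)" by (cases g2) auto
        have "(u, v) \<in> \<beta>" using g2 val gg by auto
        then have "u \<in> spow b \<and> v \<in> spow b" using hb g2(3) gg unfolding Rees_def nontriv_def by auto
        then show ?thesis using gg g2(2) unfolding ev2_def by auto
      qed
      have "g1 \<noteq> g2" using g1 g2 by auto
      then obtain A M C where "gs = A @ g1 # M @ g2 # C \<or> gs = A @ g2 # M @ g1 # C"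
        using two_pos[OF g1(1) g2(1)] by blast
      then have "sprod (map (ev2 True y) gs) \<in> spow (a + b)" for y
      proof
        assume "gs = A @ g1 # M @ g2 # C"
        then show ?thesis by (intro spow_add[OF a b _ v1 v2]) simp
      next
        assume "gs = A @ g2 # M @ g1 # C"
        then show ?thesis using spow_add[OF b a _ v2 v1] by (simp add: add.commute)
      qed
      then show ?thesis by (simp add: Rees_def)
    qed
  qed
qed



lemma snoc_mult: "sprod (us @ [x * y]) = sprod (us @ [x]) * y"
  by (cases "us = []") (auto simp: sprod_append mult.assoc)

lemma cons_mult: "sprod (x * y # us) = x * sprod (y # us)"
  by (cases "us = []") (auto simp: sprod_Cons mult.assoc)

locale rb =
  fixes m :: nat and T :: "'a::semigroup_mult set"
  assumes T_def: "T = spow m" and m1: "1 \<le> m" and rb: "rect_band T"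
begin

lemma idem: "x \<in> T \<Longrightarrow> x * x = x"
  using rb unfolding rect_band_def by blast

lemma rect: "x \<in> T \<Longrightarrow> y \<in> T \<Longrightarrow> z \<in> T \<Longrightarrow> x * y * z = x * z"
  using rb unfolding rect_band_def by blast

lemma Tmult: "x \<in> T \<Longrightarrow> x * c \<in> T \<and> c * x \<in> T"
  using spow_mult[OF m1] T_def by blast

lemma Tmem: "e \<in> set xs \<Longrightarrow> e \<in> T \<Longrightarrow> sprod xs \<in> T"
  using sprod_mem[OF m1] T_def by blast

lemma absorb: "X \<in> T \<Longrightarrow> t \<in> T \<Longrightarrow> X * c * t = X * t"
proof -
  assume X: "X \<in> T" and t: "t \<in> T"
  have "X * c * t = X * (X * c) * t" using idem[OF X] by (metis mult.assoc)
  also have "\<dots> = X * t" using rect[OF X _ t] Tmult[OF X] by blast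
  finally show ?thesis .
qed

lemma H1L:
  assumes e: "e \<in> T" and t: "t \<in> T"
  shows "sprod (P @ e # B @ [t]) = sprod (P @ [e]) * t"
proof -
  have X: "sprod (P @ [e]) \<in> T" using Tmem[OF _ e] by simp
  have "sprod (P @ e # B @ [t]) = sprod ((P @ [e]) @ (B @ [t]))" by simp
  also have "\<dots> = sprod (P @ [e]) * sprod (B @ [t])" by (rule sprod_append) auto
  also have "\<dots> = sprod (P @ [e]) * t"
  proof (cases "B = []")
    case False
    then have "sprod (B @ [t]) = sprod B * t" using sprod_append[of B "[t]"] by simp
    then show ?thesis using absorb[OF X t] by (simp add: mult.assoc)
  qed simp
  finally show ?thesis .
qed

lemma H1R:
  assumes e: "e \<in> T" and t: "t \<in> T"
  shows "sprod (t # A @ e # S) = t * sprod (e # S)"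
proof (cases "A = []")
  case True then show ?thesis by (simp add: sprod_Cons)
next
  case False
  have Y: "sprod (e # S) \<in> T" using Tmem[OF _ e] by simp
  have "sprod (t # A @ e # S) = t * (sprod A * sprod (e # S))"
    using False by (simp add: sprod_Cons sprod_append)
  also have "\<dots> = t * sprod (e # S)" using absorb[OF t Y] by (simp add: mult.assoc)
  finally show ?thesis .
qed

lemma keyL:
  assumes W: "W = P @ e # B" and e: "e \<in> T" and t: "t \<in> T"
  shows "sprod (us @ [sprod W]) * t = sprod (us @ P @ [e]) * t"
proof -
  have ne: "W \<noteq> []" using W by simp
  have "sprod (us @ [sprod W]) * t = sprod (us @ W) * t" using sprod_flat[OF ne, of us "[]"] by simp
  also have "\<dots> = sprod (us @ W @ [t])" using sprod_append[of "us @ W" "[t]"] ne by simp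
  also have "\<dots> = sprod ((us @ P) @ e # B @ [t])" using W by simp
  also have "\<dots> = sprod (us @ P @ [e]) * t" using H1L[OF e t, of "us @ P" B] by simp
  finally show ?thesis .
qed

lemma keyR:
  assumes W: "W = A @ e # S" and e: "e \<in> T" and t: "t \<in> T"
  shows "t * sprod (sprod W # us) = t * sprod (e # S @ us)"
proof -
  have ne: "W \<noteq> []" using W by simp
  have "t * sprod (sprod W # us) = t * sprod (W @ us)" using sprod_flat[OF ne, of "[]" us] by simp
  also have "\<dots> = sprod (t # W @ us)" using ne by (simp add: sprod_Cons)
  also have "\<dots> = sprod (t # A @ e # S @ us)" using W by simp
  also have "\<dots> = t * sprod (e # S @ us)" using H1R[OF e t] by simp
  finally show ?thesis .
qed

lemma LR_eq:
  assumes a: "a \<in> T" and b: "b \<in> T" and L: "\<And>t. t \<in> T \<Longrightarrow> a * t = b * t"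
    and R: "\<And>t. t \<in> T \<Longrightarrow> t * a = t * b"
  shows "a = b"
proof -
  have "a = a * a" using idem[OF a] by simp
  also have "\<dots> = a * b" using R[OF a] .
  also have "\<dots> = b * b" using L[OF b] .
  also have "\<dots> = b" using idem[OF b] .
  finally show ?thesis .
qed

definition theta :: "nat \<Rightarrow> 'a rel" where
  "theta k = {(a, b). a = b \<or> (a \<in> T \<and> b \<in> T \<and> (\<forall>us t. k \<le> length us \<longrightarrow> t \<in> T \<longrightarrow>
      sprod (us @ [a]) * t = sprod (us @ [b]) * t \<and> t * sprod (a # us) = t * sprod (b # us)))}"

lemma thetaI:
  assumes "a \<in> T" "b \<in> T"
    and "\<And>us t. k \<le> length us \<Longrightarrow> t \<in> T \<Longrightarrow> sprod (us @ [a]) * t = sprod (us @ [b]) * t"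
    and "\<And>us t. k \<le> length us \<Longrightarrow> t \<in> T \<Longrightarrow> t * sprod (a # us) = t * sprod (b # us)"
  shows "(a, b) \<in> theta k"
  using assms unfolding theta_def by blast

lemma theta_refl: "(a, a) \<in> theta k"
  unfolding theta_def by blast

lemma theta_T: "(a, b) \<in> theta k \<Longrightarrow> a \<noteq> b \<Longrightarrow> a \<in> T \<and> b \<in> T"
  unfolding theta_def by blast

lemma theta_DL: "(a, b) \<in> theta k \<Longrightarrow> k \<le> length us \<Longrightarrow> t \<in> T \<Longrightarrow>
    sprod (us @ [a]) * t = sprod (us @ [b]) * t"
  unfolding theta_def by auto

lemma theta_DR: "(a, b) \<in> theta k \<Longrightarrow> k \<le> length us \<Longrightarrow> t \<in> T \<Longrightarrow>
    t * sprod (a # us) = t * sprod (b # us)"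
  unfolding theta_def by auto

lemma theta_0: "theta 0 = Id"
proof
  show "theta 0 \<subseteq> Id"
  proof
    fix p assume p: "p \<in> theta 0"
    obtain a b where ab: "p = (a, b)" by (cases p)
    show "p \<in> Id"
    proof (cases "a = b")
      case False
      then have T: "a \<in> T" "b \<in> T" using theta_T p ab by auto
      have "a = b"
      proof (rule LR_eq[OF T])
        fix t assume "t \<in> T"
        then show "a * t = b * t" using theta_DL[of a b 0 "[]" t] p ab by simp
      next
        fix t assume "t \<in> T"
        then show "t * a = t * b" using theta_DR[of a b 0 "[]" t] p ab by simp
      qed
      then show ?thesis using ab by simp
    qed (simp add: ab)
  qed
  show "Id \<subseteq> theta 0" using theta_refl by auto
qed

lemma theta_mono: "k \<le> k' \<Longrightarrow> theta k \<subseteq> theta k'"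
  unfolding theta_def by fastforce

lemma Rees_theta: "Rees T \<subseteq> theta m"
proof
  fix p assume p: "p \<in> Rees T"
  obtain a b where ab: "p = (a, b)" by (cases p)
  show "p \<in> theta m"
  proof (cases "a = b")
    case True then show ?thesis using ab theta_refl by simp
  next
    case False
    then have a: "a \<in> T" and b: "b \<in> T" using p ab unfolding Rees_def by auto
    have "(a, b) \<in> theta m"
    proof (rule thetaI[OF a b])
      fix us :: "'a list" and t assume l: "m \<le> length us" and t: "t \<in> T"
      then have X: "sprod us \<in> T" using sprod_in_spow[OF m1] T_def by simp
      have ne: "us \<noteq> []" using l m1 by auto
      have "sprod (us @ [c]) * t = sprod us * t" if "c \<in> T" for c
        using ne rect[OF X that t] by (simp add: sprod_append)
      then show "sprod (us @ [a]) * t = sprod (us @ [b]) * t" using a b by simp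
    next
      fix us :: "'a list" and t assume l: "m \<le> length us" and t: "t \<in> T"
      then have X: "sprod us \<in> T" using sprod_in_spow[OF m1] T_def by simp
      have ne: "us \<noteq> []" using l m1 by auto
      have "t * sprod (c # us) = t * sprod us" if "c \<in> T" for c
        using ne rect[OF t that X] by (simp add: sprod_Cons mult.assoc)
      then show "t * sprod (a # us) = t * sprod (b # us)" using a b by simp
    qed
    then show ?thesis using ab by simp
  qed
qed

lemma theta_cong: "congruence (theta k)"
  unfolding congruence_def
proof (intro conjI allI impI)
  show "equiv UNIV (theta k)"
    unfolding equiv_def refl_on_def sym_def trans_def theta_def by auto
next
  fix a b c d assume ab: "(a, b) \<in> theta k" and cd: "(c, d) \<in> theta k"
  show "(a * c, b * d) \<in> theta k"
  proof (cases "a = b \<and> c = d")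
    case True then show ?thesis using theta_refl by simp
  next
    case False
    then have "(a \<in> T \<and> b \<in> T) \<or> (c \<in> T \<and> d \<in> T)" using theta_T ab cd by blast
    then have T: "a * c \<in> T" "b * d \<in> T" using Tmult by blast+
    show ?thesis
    proof (rule thetaI[OF T])
      fix us :: "'a list" and t assume l: "k \<le> length us" and t: "t \<in> T"
      have ct: "c * t \<in> T" using Tmult[OF t] by blast
      have "sprod (us @ [a * c]) * t = sprod (us @ [a]) * (c * t)" by (simp add: snoc_mult mult.assoc)
      also have "\<dots> = sprod (us @ [b]) * (c * t)" using theta_DL[OF ab l ct] .
      also have "\<dots> = sprod ((us @ [b]) @ [c]) * t"
        using sprod_append[of "us @ [b]" "[c]"] by (simp add: mult.assoc)
      also have "\<dots> = sprod ((us @ [b]) @ [d]) * t" using theta_DL[OF cd _ t, of "us @ [b]"] l by simp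
      also have "\<dots> = sprod (us @ [b * d]) * t"
        using sprod_append[of "us @ [b]" "[d]"] by (simp add: snoc_mult)
      finally show "sprod (us @ [a * c]) * t = sprod (us @ [b * d]) * t" .
    next
      fix us :: "'a list" and t assume l: "k \<le> length us" and t: "t \<in> T"
      have ta: "t * a \<in> T" using Tmult[OF t] by blast
      have "t * sprod (a * c # us) = (t * a) * sprod (c # us)" by (simp add: cons_mult mult.assoc)
      also have "\<dots> = (t * a) * sprod (d # us)" using theta_DR[OF cd l ta] .
      also have "\<dots> = t * sprod (a # d # us)" by (simp add: sprod_Cons mult.assoc)
      also have "\<dots> = t * sprod (b # d # us)" using theta_DR[OF ab _ t, of "d # us"] l by simp
      also have "\<dots> = t * sprod (b * d # us)" by (simp add: sprod_Cons cons_mult mult.assoc)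
      finally show "t * sprod (a * c # us) = t * sprod (b * d # us)" .
    qed
  qed
qed

end



context rb begin

lemma theta_left:
  assumes hb: "\<beta> \<subseteq> theta (Suc k)"
  shows "term_cond [\<alpha>, \<beta>] (theta k)"
proof (rule tc2)
  fix gs :: "(nat \<times> 'a \<times> 'a) list"
  assume ne: "gs \<noteq> []" and val: "\<forall>g\<in>set gs. (fst g = 0 \<and> snd g \<in> \<alpha>) \<or> (fst g = 1 \<and> snd g \<in> \<beta>)"
    and H: "(sprod (map (ev2 False False) gs), sprod (map (ev2 False True) gs)) \<in> theta k"
  define F where "F x y = sprod (map (ev2 x y) gs)" for x y
  show "(sprod (map (ev2 True False) gs), sprod (map (ev2 True True) gs)) \<in> theta k"
  proof (cases "\<exists>g\<in>set gs. fst g \<noteq> 0 \<and> nontriv g")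
    case False
    have "map (ev2 True False) gs = map (ev2 True True) gs"
    proof (rule map_cong[OF refl])
      fix g assume "g \<in> set gs"
      with False show "ev2 True False g = ev2 True True g" by (intro ev2_y) blast
    qed
    then show ?thesis by (simp add: theta_refl)
  next
    case True
    obtain pre g post where gs1: "gs = pre @ g # post" and Pg: "fst g \<noteq> 0 \<and> nontriv g"
      and pre: "\<forall>h\<in>set pre. \<not> (fst h \<noteq> 0 \<and> nontriv h)"
      using split_list_first_prop[OF True] by blast
    obtain pre' g' post' where gs2: "gs = pre' @ g' # post'" and Pg': "fst g' \<noteq> 0 \<and> nontriv g'"
      and post: "\<forall>h\<in>set post'. \<not> (fst h \<noteq> 0 \<and> nontriv h)"
      using split_list_last_prop[OF True] by blast
    obtain i a b where g: "g = (i, a, b)" by (cases g) auto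
    have gb: "(a, b) \<in> theta (Suc k)" "a \<noteq> b" using val gs1 g Pg hb unfolding nontriv_def by auto
    then have aT: "a \<in> T" and bT: "b \<in> T" using theta_T by blast+
    have evg: "ev2 x y g = (if y then b else a)" for x y using g Pg by (simp add: ev2_def)
    obtain i' a' b' where g': "g' = (i', a', b')" by (cases g') auto
    have gb': "(a', b') \<in> theta (Suc k)" "a' \<noteq> b'" using val gs2 g' Pg' hb unfolding nontriv_def by auto
    then have aT': "a' \<in> T" and bT': "b' \<in> T" using theta_T by blast+
    have evg': "ev2 x y g' = (if y then b' else a')" for x y using g' Pg' by (simp add: ev2_def)
    have evT: "ev2 x y g \<in> T" "ev2 x y g' \<in> T" for x y using evg evg' aT bT aT' bT' by auto
    have preq: "map (ev2 x y) pre = map (ev2 x y') pre" for x y y'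
    proof (rule map_cong[OF refl])
      fix h assume "h \<in> set pre"
      with pre show "ev2 x y h = ev2 x y' h" by (intro ev2_y) blast
    qed
    have postq: "map (ev2 x y) post' = map (ev2 x y') post'" for x y y'
    proof (rule map_cong[OF refl])
      fix h assume "h \<in> set post'"
      with post show "ev2 x y h = ev2 x y' h" by (intro ev2_y) blast
    qed
    have FT: "F x y \<in> T" for x y
      unfolding F_def using Tmem[OF _ evT(1), of x y "map (ev2 x y) gs"] gs1 by simp
    have KL: "sprod (us @ [F x y]) * t = sprod (us @ map (ev2 x y) pre @ [ev2 x y g]) * t"
      if "t \<in> T" for us t x y
      unfolding F_def by (rule keyL[OF _ evT(1) that]) (simp add: gs1)
    have KR: "t * sprod (F x y # us) = t * sprod (ev2 x y g' # map (ev2 x y) post' @ us)"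
      if "t \<in> T" for us t x y
      unfolding F_def by (rule keyR[OF _ evT(2) that]) (simp add: gs2)
    have "(F True False, F True True) \<in> theta k"
    proof (rule thetaI[OF FT FT])
      fix us :: "'a list" and t assume l: "k \<le> length us" and t: "t \<in> T"
      show "sprod (us @ [F True False]) * t = sprod (us @ [F True True]) * t"
      proof (cases "pre = []")
        case True
        have "sprod (us @ [F True False]) * t = sprod (us @ [a]) * t" using KL[OF t] True evg by simp
        also have "\<dots> = sprod (us @ [F False False]) * t" using KL[OF t] True evg by simp
        also have "\<dots> = sprod (us @ [F False True]) * t" using theta_DL[OF H l t] unfolding F_def .
        also have "\<dots> = sprod (us @ [b]) * t" using KL[OF t] True evg by simp
        also have "\<dots> = sprod (us @ [F True True]) * t" using KL[OF t] True evg by simp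
        finally show ?thesis .
      next
        case False
        define us' where "us' = us @ map (ev2 True False) pre"
        have l': "Suc k \<le> length us'" using l False unfolding us'_def by (cases pre) auto
        have "sprod (us @ [F True False]) * t = sprod (us' @ [a]) * t"
          using KL[OF t] evg unfolding us'_def by simp
        also have "\<dots> = sprod (us' @ [b]) * t" using theta_DL[OF gb(1) l' t] .
        also have "\<dots> = sprod (us @ [F True True]) * t"
          using KL[OF t] evg preq[of True False True] unfolding us'_def by simp
        finally show ?thesis .
      qed
    next
      fix us :: "'a list" and t assume l: "k \<le> length us" and t: "t \<in> T"
      show "t * sprod (F True False # us) = t * sprod (F True True # us)"
      proof (cases "post' = []")
        case True
        have "t * sprod (F True False # us) = t * sprod (a' # us)" using KR[OF t] True evg' by simp
        also have "\<dots> = t * sprod (F False False # us)" using KR[OF t] True evg' by simp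
        also have "\<dots> = t * sprod (F False True # us)" using theta_DR[OF H l t] unfolding F_def .
        also have "\<dots> = t * sprod (b' # us)" using KR[OF t] True evg' by simp
        also have "\<dots> = t * sprod (F True True # us)" using KR[OF t] True evg' by simp
        finally show ?thesis .
      next
        case False
        define vs' where "vs' = map (ev2 True False) post' @ us"
        have l': "Suc k \<le> length vs'" using l False unfolding vs'_def by (cases post') auto
        have "t * sprod (F True False # us) = t * sprod (a' # vs')"
          using KR[OF t] evg' unfolding vs'_def by simp
        also have "\<dots> = t * sprod (b' # vs')" using theta_DR[OF gb'(1) l' t] .
        also have "\<dots> = t * sprod (F True True # us)"
          using KR[OF t] evg' postq[of True False True] unfolding vs'_def by simp
        finally show ?thesis .
      qed
    qed
    then show ?thesis unfolding F_def .
  qed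
qed

end



context rb begin

lemma theta_right:
  assumes ha: "\<alpha> \<subseteq> theta (Suc k)"
  shows "term_cond [\<alpha>, \<beta>] (theta k)"
proof (rule tc2)
  fix gs :: "(nat \<times> 'a \<times> 'a) list"
  assume ne: "gs \<noteq> []" and val: "\<forall>g\<in>set gs. (fst g = 0 \<and> snd g \<in> \<alpha>) \<or> (fst g = 1 \<and> snd g \<in> \<beta>)"
    and H: "(sprod (map (ev2 False False) gs), sprod (map (ev2 False True) gs)) \<in> theta k"
  define F where "F x y = sprod (map (ev2 x y) gs)" for x y
  show "(sprod (map (ev2 True False) gs), sprod (map (ev2 True True) gs)) \<in> theta k"
  proof (cases "\<exists>g\<in>set gs. fst g = 0 \<and> nontriv g")
    case False
    have "map (ev2 True y) gs = map (ev2 False y) gs" for y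
    proof (rule map_cong[OF refl])
      fix g assume "g \<in> set gs"
      with False show "ev2 True y g = ev2 False y g" by (intro ev2_x) blast
    qed
    then show ?thesis using H by simp
  next
    case True
    obtain pre g post where gs1: "gs = pre @ g # post" and Pg: "fst g = 0 \<and> nontriv g"
      and pre: "\<forall>h\<in>set pre. \<not> (fst h = 0 \<and> nontriv h)"
      using split_list_first_prop[OF True] by blast
    obtain pre' g' post' where gs2: "gs = pre' @ g' # post'" and Pg': "fst g' = 0 \<and> nontriv g'"
      and post: "\<forall>h\<in>set post'. \<not> (fst h = 0 \<and> nontriv h)"
      using split_list_last_prop[OF True] by blast
    obtain i a b where g: "g = (i, a, b)" by (cases g) auto
    have gb: "(a, b) \<in> theta (Suc k)" "a \<noteq> b" using val gs1 g Pg ha unfolding nontriv_def by auto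
    then have aT: "a \<in> T" and bT: "b \<in> T" using theta_T by blast+
    have evg: "ev2 x y g = (if x then b else a)" for x y using g Pg by (simp add: ev2_def)
    obtain i' a' b' where g': "g' = (i', a', b')" by (cases g') auto
    have gb': "(a', b') \<in> theta (Suc k)" "a' \<noteq> b'" using val gs2 g' Pg' ha unfolding nontriv_def by auto
    then have aT': "a' \<in> T" and bT': "b' \<in> T" using theta_T by blast+
    have evg': "ev2 x y g' = (if x then b' else a')" for x y using g' Pg' by (simp add: ev2_def)
    have evT: "ev2 x y g \<in> T" "ev2 x y g' \<in> T" for x y using evg evg' aT bT aT' bT' by auto
    have preq: "map (ev2 x y) pre = map (ev2 x' y) pre" for x x' y
    proof (rule map_cong[OF refl])
      fix h assume "h \<in> set pre"
      with pre show "ev2 x y h = ev2 x' y h" by (intro ev2_x) blast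
    qed
    have postq: "map (ev2 x y) post' = map (ev2 x' y) post'" for x x' y
    proof (rule map_cong[OF refl])
      fix h assume "h \<in> set post'"
      with post show "ev2 x y h = ev2 x' y h" by (intro ev2_x) blast
    qed
    have FT: "F x y \<in> T" for x y
      unfolding F_def using Tmem[OF _ evT(1), of x y "map (ev2 x y) gs"] gs1 by simp
    have KL: "sprod (us @ [F x y]) * t = sprod (us @ map (ev2 x y) pre @ [ev2 x y g]) * t"
      if "t \<in> T" for us t x y
      unfolding F_def by (rule keyL[OF _ evT(1) that]) (simp add: gs1)
    have KR: "t * sprod (F x y # us) = t * sprod (ev2 x y g' # map (ev2 x y) post' @ us)"
      if "t \<in> T" for us t x y
      unfolding F_def by (rule keyR[OF _ evT(2) that]) (simp add: gs2)
    have "(F True False, F True True) \<in> theta k"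
    proof (rule thetaI[OF FT FT])
      fix us :: "'a list" and t assume l: "k \<le> length us" and t: "t \<in> T"
      show "sprod (us @ [F True False]) * t = sprod (us @ [F True True]) * t"
      proof (cases "pre = []")
        case True
        then show ?thesis using KL[OF t] evg by simp
      next
        case False
        have step: "sprod (us @ [F True y]) * t = sprod (us @ [F False y]) * t" for y
        proof -
          define us' where "us' = us @ map (ev2 False y) pre"
          have l': "Suc k \<le> length us'" using l False unfolding us'_def by (cases pre) auto
          have "sprod (us @ [F True y]) * t = sprod (us' @ [b]) * t"
            using KL[OF t] evg preq[of True y False] unfolding us'_def by simp
          also have "\<dots> = sprod (us' @ [a]) * t" using theta_DL[OF gb(1) l' t] by simp
          also have "\<dots> = sprod (us @ [F False y]) * t"
            using KL[OF t] evg unfolding us'_def by simp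
          finally show ?thesis .
        qed
        have "sprod (us @ [F True False]) * t = sprod (us @ [F False False]) * t" by (rule step)
        also have "\<dots> = sprod (us @ [F False True]) * t" using theta_DL[OF H l t] unfolding F_def .
        also have "\<dots> = sprod (us @ [F True True]) * t" by (rule step[symmetric])
        finally show ?thesis .
      qed
    next
      fix us :: "'a list" and t assume l: "k \<le> length us" and t: "t \<in> T"
      show "t * sprod (F True False # us) = t * sprod (F True True # us)"
      proof (cases "post' = []")
        case True
        then show ?thesis using KR[OF t] evg' by simp
      next
        case False
        have step: "t * sprod (F True y # us) = t * sprod (F False y # us)" for y
        proof -
          define vs' where "vs' = map (ev2 False y) post' @ us"
          have l': "Suc k \<le> length vs'" using l False unfolding vs'_def by (cases post') auto
          have "t * sprod (F True y # us) = t * sprod (b' # vs')"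
            using KR[OF t] evg' postq[of True y False] unfolding vs'_def by simp
          also have "\<dots> = t * sprod (a' # vs')" using theta_DR[OF gb'(1) l' t] by simp
          also have "\<dots> = t * sprod (F False y # us)"
            using KR[OF t] evg' unfolding vs'_def by simp
          finally show ?thesis .
        qed
        have "t * sprod (F True False # us) = t * sprod (F False False # us)" by (rule step)
        also have "\<dots> = t * sprod (F False True # us)" using theta_DR[OF H l t] unfolding F_def .
        also have "\<dots> = t * sprod (F True True # us)" by (rule step[symmetric])
        finally show ?thesis .
      qed
    qed
    then show ?thesis unfolding F_def .
  qed
qed

lemma final_tc:
  assumes ha: "\<alpha> \<subseteq> Rees T" and hb: "\<beta> \<subseteq> Rees T"
  shows "term_cond [\<alpha>, \<beta>] Id"
proof (rule tc2)
  fix gs :: "(nat \<times> 'a \<times> 'a) list"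
  assume ne: "gs \<noteq> []" and val: "\<forall>g\<in>set gs. (fst g = 0 \<and> snd g \<in> \<alpha>) \<or> (fst g = 1 \<and> snd g \<in> \<beta>)"
    and H: "(sprod (map (ev2 False False) gs), sprod (map (ev2 False True) gs)) \<in> Id"
  define F where "F x y = sprod (map (ev2 x y) gs)" for x y
  have HF: "F False False = F False True" using H unfolding F_def by simp
  show "(sprod (map (ev2 True False) gs), sprod (map (ev2 True True) gs)) \<in> Id"
  proof (cases "\<exists>g\<in>set gs. fst g \<noteq> 0 \<and> nontriv g")
    case False
    have "map (ev2 True False) gs = map (ev2 True True) gs"
    proof (rule map_cong[OF refl])
      fix g assume "g \<in> set gs"
      with False show "ev2 True False g = ev2 True True g" by (intro ev2_y) blast
    qed
    then show ?thesis by simp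
  next
    case Ty: True
    show ?thesis
    proof (cases "\<exists>g\<in>set gs. fst g = 0 \<and> nontriv g")
      case False
      have "map (ev2 True y) gs = map (ev2 False y) gs" for y
      proof (rule map_cong[OF refl])
        fix g assume "g \<in> set gs"
        with False show "ev2 True y g = ev2 False y g" by (intro ev2_x) blast
      qed
      then show ?thesis using H by simp
    next
      case True
      then have Ex: "\<exists>g\<in>set gs. nontriv g" by blast
      obtain pre g post where gs1: "gs = pre @ g # post" and Pg: "nontriv g"
        and pre: "\<forall>h\<in>set pre. \<not> nontriv h"
        using split_list_first_prop[OF Ex] by blast
      obtain pre' g' post' where gs2: "gs = pre' @ g' # post'" and Pg': "nontriv g'"
        and post: "\<forall>h\<in>set post'. \<not> nontriv h"
        using split_list_last_prop[OF Ex] by blast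
      obtain i a b where g: "g = (i, a, b)" by (cases g) auto
      have "(a, b) \<in> Rees T" "a \<noteq> b" using val gs1 g Pg ha hb unfolding nontriv_def by auto
      then have aT: "a \<in> T" and bT: "b \<in> T" unfolding Rees_def by auto
      obtain i' a' b' where g': "g' = (i', a', b')" by (cases g') auto
      have "(a', b') \<in> Rees T" "a' \<noteq> b'" using val gs2 g' Pg' ha hb unfolding nontriv_def by auto
      then have aT': "a' \<in> T" and bT': "b' \<in> T" unfolding Rees_def by auto
      have evT: "ev2 x y g \<in> T" "ev2 x y g' \<in> T" for x y
        using g g' aT bT aT' bT' by (auto simp: ev2_def)
      have preq: "map (ev2 x y) pre = map (ev2 x' y') pre" for x x' y y'
      proof (rule map_cong[OF refl])
        fix h assume "h \<in> set pre"
        with pre show "ev2 x y h = ev2 x' y' h" by (intro ev2_triv) blast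
      qed
      have postq: "map (ev2 x y) post' = map (ev2 x' y') post'" for x x' y y'
      proof (rule map_cong[OF refl])
        fix h assume "h \<in> set post'"
        with post show "ev2 x y h = ev2 x' y' h" by (intro ev2_triv) blast
      qed
      have FT: "F x y \<in> T" for x y
        unfolding F_def using Tmem[OF _ evT(1), of x y "map (ev2 x y) gs"] gs1 by simp
      have KL: "F x y * t = sprod (map (ev2 x y) pre @ [ev2 x y g]) * t"
        if "t \<in> T" for t x y
      proof -
        have "sprod ([] @ [F x y]) * t = sprod ([] @ map (ev2 x y) pre @ [ev2 x y g]) * t"
          unfolding F_def by (rule keyL[OF _ evT(1) that]) (simp add: gs1)
        then show ?thesis by simp
      qed
      have KR: "t * F x y = t * sprod (ev2 x y g' # map (ev2 x y) post')"
        if "t \<in> T" for t x y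
      proof -
        have "t * sprod (F x y # []) = t * sprod (ev2 x y g' # map (ev2 x y) post' @ [])"
          unfolding F_def by (rule keyR[OF _ evT(2) that]) (simp add: gs2)
        then show ?thesis by simp
      qed
      have "F True False = F True True"
      proof (rule LR_eq[OF FT FT])
        fix t assume t: "t \<in> T"
        show "F True False * t = F True True * t"
        proof (cases "i = 0")
          case True
          then show ?thesis using KL[OF t] preq[of True False True True] g by (simp add: ev2_def)
        next
          case False
          have "F True y * t = F False y * t" for y
            using KL[OF t] preq[of True y False y] g False by (simp add: ev2_def)
          then show ?thesis using HF by metis
        qed
      next
        fix t assume t: "t \<in> T"
        show "t * F True False = t * F True True"
        proof (cases "i' = 0")
          case True
          then show ?thesis using KR[OF t] postq[of True False True True] g' by (simp add: ev2_def)
        next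
          case False
          have "t * F True y = t * F False y" for y
            using KR[OF t] postq[of True y False y] g' False by (simp add: ev2_def)
          then show ?thesis using HF by metis
        qed
      qed
      then show ?thesis unfolding F_def by simp
    qed
  qed
qed

end



lemma Id_lseries: "Id \<subseteq> lseries k"
  by (cases k rule: lseries.cases) (auto simp: Id_le_comm[THEN subsetD])
lemma Id_rseries: "Id \<subseteq> rseries k"
  by (cases k rule: rseries.cases) (auto simp: Id_le_comm[THEN subsetD])
lemma Id_derived: "Id \<subseteq> derived k"
  by (cases k) (auto simp: Id_le_comm[THEN subsetD])

lemma log_bound:
  assumes m: "1 \<le> m" shows "m \<le> 2 ^ nat \<lceil>log 2 (real m)\<rceil>"
proof -
  have pos: "0 < real m" using m by simp
  have l0: "0 \<le> log 2 (real m)" using m by simp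
  have "real m = 2 powr (log 2 (real m))" using pos by simp
  also have "\<dots> \<le> 2 powr (real_of_int \<lceil>log 2 (real m)\<rceil>)"
    by (intro powr_mono) auto
  also have "real_of_int \<lceil>log 2 (real m)\<rceil> = real (nat \<lceil>log 2 (real m)\<rceil>)"
    using l0 by simp
  also have "2 powr real (nat \<lceil>log 2 (real m)\<rceil>) = 2 ^ nat \<lceil>log 2 (real m)\<rceil>"
    by (simp add: powr_realpow)
  finally have "real m \<le> real (2 ^ nat \<lceil>log 2 (real m)\<rceil>)" by simp
  then show ?thesis by linarith
qed

lemma Rees_1': "Rees (spow (Suc 0)) = UNIV"
  using Rees_1 by simp

context rb begin

lemma lseries_Rees: "lseries (Suc k) \<subseteq> Rees (spow (Suc k) :: 'a set)"
proof (induction k)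
  case 0 then show ?case by (simp add: Rees_1 Rees_1')
next
  case (Suc k)
  have "comm [UNIV, lseries (Suc k)] \<subseteq> Rees (spow (1 + Suc k) :: 'a set)"
    by (rule comm_le[OF Rees_cong tc_Rees]) (use Suc Rees_1 Rees_1' in auto)
  then show ?case by simp
qed

lemma rseries_Rees: "rseries (Suc k) \<subseteq> Rees (spow (Suc k) :: 'a set)"
proof (induction k)
  case 0 then show ?case by (simp add: Rees_1 Rees_1')
next
  case (Suc k)
  have "comm [rseries (Suc k), UNIV] \<subseteq> Rees (spow (Suc k + 1) :: 'a set)"
    by (rule comm_le[OF Rees_cong tc_Rees]) (use Suc Rees_1 Rees_1' in auto)
  then show ?case by simp
qed

lemma lseries_theta: "lseries (m + i) \<subseteq> theta (m - i)"
proof (induction i)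
  case 0
  have "lseries (Suc (m - 1)) \<subseteq> Rees (spow (Suc (m - 1)) :: 'a set)" by (rule lseries_Rees)
  then show ?case using m1 Rees_theta T_def by auto
next
  case (Suc i)
  have e: "lseries (m + Suc i) = (comm [UNIV, lseries (m + i)] :: 'a rel)"
    using m1 by (cases "m + i") auto
  have "lseries (m + i) \<subseteq> theta (Suc (m - Suc i))"
  proof -
    have "m - i \<le> Suc (m - Suc i)" by arith
    then show ?thesis using Suc theta_mono by blast
  qed
  then have "comm [UNIV, lseries (m + i)] \<subseteq> theta (m - Suc i)"
    by (intro comm_le[OF theta_cong theta_left])
  then show ?case using e by simp
qed

lemma rseries_theta: "rseries (m + i) \<subseteq> theta (m - i)"
proof (induction i)
  case 0
  have "rseries (Suc (m - 1)) \<subseteq> Rees (spow (Suc (m - 1)) :: 'a set)" by (rule rseries_Rees)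
  then show ?case using m1 Rees_theta T_def by auto
next
  case (Suc i)
  have e: "rseries (m + Suc i) = (comm [rseries (m + i), UNIV] :: 'a rel)"
    using m1 by (cases "m + i") auto
  have "rseries (m + i) \<subseteq> theta (Suc (m - Suc i))"
  proof -
    have "m - i \<le> Suc (m - Suc i)" by arith
    then show ?thesis using Suc theta_mono by blast
  qed
  then have "comm [rseries (m + i), UNIV] \<subseteq> theta (m - Suc i)"
    by (intro comm_le[OF theta_cong theta_right])
  then show ?case using e by simp
qed

lemma lnil: "lseries (2 * m + 1) = (Id :: 'a rel)"
proof -
  have "lseries (2 * m + 1) \<subseteq> (Id :: 'a rel)"
    using lseries_theta[of "m + 1"] theta_0 by (simp add: mult_2 add.assoc)
  then show ?thesis using Id_lseries by blast
qed

lemma rnil: "rseries (2 * m + 1) = (Id :: 'a rel)"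
proof -
  have "rseries (2 * m + 1) \<subseteq> (Id :: 'a rel)"
    using rseries_theta[of "m + 1"] theta_0 by (simp add: mult_2 add.assoc)
  then show ?thesis using Id_rseries by blast
qed

lemma derived_Rees: "derived k \<subseteq> Rees (spow (2 ^ k) :: 'a set)"
proof (induction k)
  case 0 then show ?case by (simp add: Rees_1 Rees_1')
next
  case (Suc k)
  have "comm [derived k, derived k] \<subseteq> Rees (spow (2 ^ k + 2 ^ k) :: 'a set)"
    by (rule comm_le[OF Rees_cong tc_Rees]) (use Suc in \<open>auto simp: Suc_le_eq\<close>)
  then show ?case by (simp add: mult_2)
qed

lemma derived_T: "derived (nat \<lceil>log 2 (real m)\<rceil>) \<subseteq> Rees T"
proof -
  have "spow (2 ^ nat \<lceil>log 2 (real m)\<rceil>) \<subseteq> (spow m :: 'a set)"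
    using spow_mono[OF m1 log_bound[OF m1]] .
  then show ?thesis using derived_Rees Rees_mono T_def by blast
qed

lemma solv: "derived (nat \<lceil>log 2 (real m)\<rceil> + 1) = (Id :: 'a rel)"
  using comm_Id[OF final_tc[OF derived_T derived_T]] by simp

lemma sprod_2m:
  fixes ws :: "'a list"
  assumes l: "2 * m \<le> length ws"
  shows "sprod ws = sprod (take m ws @ drop (length ws - m) ws)"
proof -
  define A where "A = take m ws"
  define M where "M = drop m (take (length ws - m) ws)"
  define C where "C = drop (length ws - m) ws"
  have mm: "m \<le> length ws - m" using l by simp
  have "take m (take (length ws - m) ws) = A" unfolding A_def using mm by (simp add: min_def)
  then have ws: "ws = A @ M @ C" unfolding M_def C_def
    by (metis append_take_drop_id append.assoc)
  have lA: "length A = m" and lC: "length C = m" using l unfolding A_def C_def by auto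
  have AT: "sprod A \<in> T" and CT: "sprod C \<in> T"
    using sprod_in_spow[OF m1, of A] sprod_in_spow[OF m1, of C] lA lC T_def by auto
  have neA: "A \<noteq> []" and neC: "C \<noteq> []" using lA lC m1 by auto
  have "sprod ws = sprod (A @ C)"
  proof (cases "M = []")
    case True then show ?thesis using ws by simp
  next
    case False
    have "sprod ws = sprod A * sprod M * sprod C"
      using ws neA neC False by (simp add: sprod_append mult.assoc)
    also have "\<dots> = sprod A * sprod C" using absorb[OF AT CT] .
    also have "\<dots> = sprod (A @ C)" using neA neC by (simp add: sprod_append)
    finally show ?thesis .
  qed
  then show ?thesis unfolding A_def C_def .
qed

lemma supnil: "comm (replicate (2 * m + 1) (UNIV :: 'a rel)) = Id"
proof (rule comm_Id, rule tcn[of _ "2 * m + 1"])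
  fix gs :: "(nat \<times> 'a \<times> 'a) list"
  assume "gs \<noteq> []" "\<forall>g\<in>set gs. fst g < 2 * m + 1"
  show "\<exists>gs'. set gs' \<subseteq> set gs \<and> length gs' < 2 * m + 1 \<and>
      (\<forall>x. sprod (map (ev x) gs) = sprod (map (ev x) gs'))"
  proof (cases "2 * m \<le> length gs")
    case True
    show ?thesis
    proof (intro exI conjI allI)
      show "set (take m gs @ drop (length gs - m) gs) \<subseteq> set gs"
        using set_take_subset set_drop_subset by fastforce
      show "length (take m gs @ drop (length gs - m) gs) < 2 * m + 1" using True by simp
      fix x
      show "sprod (map (ev x) gs) = sprod (map (ev x) (take m gs @ drop (length gs - m) gs))"
        using sprod_2m[of "map (ev x) gs"] True by (simp add: take_map drop_map)
    qed
  next
    case False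
    then show ?thesis by (intro exI[of _ gs]) auto
  qed
qed auto

end



context rb begin

lemma abel: "m = 1 \<Longrightarrow> comm [UNIV, UNIV :: 'a rel] = Id"
proof -
  assume "m = 1"
  then have "Rees T = UNIV" using T_def Rees_1 by simp
  then show ?thesis using comm_Id[OF final_tc[of UNIV UNIV]] by simp
qed

context
  fixes a0 :: 'a
  assumes triv: "spow m = {a0}"
begin

lemma ReesT0: "Rees T = Id"
  using triv T_def Rees_single by simp

lemma solv0: "derived (nat \<lceil>log 2 (real m)\<rceil>) = (Id :: 'a rel)"
  using derived_T ReesT0 Id_derived by blast

lemma lnil0: "lseries (m + 1) = (Id :: 'a rel)"
proof -
  have "spow (Suc m) \<subseteq> (spow m :: 'a set)" by (rule spow_mono[OF m1]) simp
  then have "lseries (Suc m) \<subseteq> (Id :: 'a rel)"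
    using lseries_Rees[of m] Rees_mono ReesT0 T_def by blast
  then show ?thesis using Id_lseries by auto
qed

lemma rnil0: "rseries (m + 1) = (Id :: 'a rel)"
proof -
  have "spow (Suc m) \<subseteq> (spow m :: 'a set)" by (rule spow_mono[OF m1]) simp
  then have "rseries (Suc m) \<subseteq> (Id :: 'a rel)"
    using rseries_Rees[of m] Rees_mono ReesT0 T_def by blast
  then show ?thesis using Id_rseries by auto
qed

lemma supnil0: "comm (replicate (m + 1) (UNIV :: 'a rel)) = Id"
proof (rule comm_Id, rule tcn[of _ "m + 1"])
  fix gs :: "(nat \<times> 'a \<times> 'a) list"
  assume "gs \<noteq> []" "\<forall>g\<in>set gs. fst g < m + 1"
  show "\<exists>gs'. set gs' \<subseteq> set gs \<and> length gs' < m + 1 \<and>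
      (\<forall>x. sprod (map (ev x) gs) = sprod (map (ev x) gs'))"
  proof (cases "m \<le> length gs")
    case True
    show ?thesis
    proof (intro exI conjI allI)
      show "set (take m gs) \<subseteq> set gs" by (rule set_take_subset)
      show "length (take m gs) < m + 1" by simp
      fix x
      have "sprod (map (ev x) gs) \<in> spow m" using sprod_in_spow[OF m1, of "map (ev x) gs"] True by simp
      moreover have "sprod (map (ev x) (take m gs)) \<in> spow m"
        using sprod_in_spow[OF m1, of "map (ev x) (take m gs)"] True by simp
      ultimately show "sprod (map (ev x) gs) = sprod (map (ev x) (take m gs))" using triv by simp
    qed
  next
    case False
    then show ?thesis by (intro exI[of _ gs]) auto
  qed
qed auto

end

end

theorem lemma3p2:
  fixes m :: nat
  assumes "m \<ge> 1"
    and "rect_band (spow m :: 'a::semigroup_mult set)"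
  shows "(m = 1 \<longrightarrow> abelian TYPE('a))
    \<and> solvable TYPE('a) (nat \<lceil>log 2 (real m)\<rceil> + 1)
    \<and> ((\<exists>a. spow m = {a :: 'a}) \<longrightarrow> solvable TYPE('a) (nat \<lceil>log 2 (real m)\<rceil>))
    \<and> left_nilpotent TYPE('a) (2 * m) \<and> right_nilpotent TYPE('a) (2 * m)
    \<and> supernilpotent TYPE('a) (2 * m)
    \<and> ((\<exists>a. spow m = {a :: 'a}) \<longrightarrow>
         left_nilpotent TYPE('a) m \<and> right_nilpotent TYPE('a) m \<and> supernilpotent TYPE('a) m)"
proof -
  interpret rb m "spow m :: 'a set" using assms by unfold_locales auto
  show ?thesis
    unfolding abelian_def solvable_def left_nilpotent_def right_nilpotent_def supernilpotent_def
  proof (intro conjI impI)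
    show "m = 1 \<Longrightarrow> comm [UNIV, UNIV :: 'a rel] = Id" by (rule abel)
    show "derived (nat \<lceil>log 2 (real m)\<rceil> + 1) = (Id :: 'a rel)" by (rule solv)
    show "lseries (2 * m + 1) = (Id :: 'a rel)" by (rule lnil)
    show "rseries (2 * m + 1) = (Id :: 'a rel)" by (rule rnil)
    show "comm (replicate (2 * m + 1) (UNIV :: 'a rel)) = Id" by (rule supnil)
  next
    assume "\<exists>a. spow m = {a :: 'a}"
    then obtain a0 where t: "spow m = {a0 :: 'a}" by blast
    show "derived (nat \<lceil>log 2 (real m)\<rceil>) = (Id :: 'a rel)" by (rule solv0[OF t])
  next
    assume "\<exists>a. spow m = {a :: 'a}"
    then obtain a0 where t: "spow m = {a0 :: 'a}" by blast
    show "lseries (m + 1) = (Id :: 'a rel)" by (rule lnil0[OF t])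
  next
    assume "\<exists>a. spow m = {a :: 'a}"
    then obtain a0 where t: "spow m = {a0 :: 'a}" by blast
    show "rseries (m + 1) = (Id :: 'a rel)" by (rule rnil0[OF t])
  next
    assume "\<exists>a. spow m = {a :: 'a}"
    then obtain a0 where t: "spow m = {a0 :: 'a}" by blast
    show "comm (replicate (m + 1) (UNIV :: 'a rel)) = Id" by (rule supnil0[OF t])
  qed
qed


end
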